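(* For every alphabet $\Sigma$, every $n\ge 2$ and every $n$-gram LM $p$ over $\Sigma$, there exists a single-layer sparse attention transformer LM with $n-1$ attention heads that is weakly equivalent to $p$.
   Context: Let $\Sigma$ be a finite nonempty alphabet and let $\mathrm{EOS},\mathrm{BOS}\notin\Sigma$ be distinct symbols; put $\overline\Sigma=\Sigma\cup\{\mathrm{EOS}\}$ and $\underline\Sigma=\Sigma\cup\{\mathrm{BOS}\}$. A language model (LM) over $\Sigma$ is a probability distribution $p$ on $\Sigma^*$ given autoregressively by $p(y)=p(\mathrm{EOS}\mid y)\prod_{t=1}^{|y|}p(y_t\mid y_{<t})$, where each $p(\cdot\mid y_{<t})$ is a probability distribution on $\overline\Sigma$. Two LMs $p,q$ over $\Sigma$ are weakly equivalent if $p(y)=q(y)$ for all $y\in\Sigma^*$. For $n\ge2$, an $n$-gram LM is an LM such that, after left-padding every string with $n-1$ copies of $\mathrm{BOS}$, $p(y_t\mid y_{<t})=p(y_t\mid y_{t-n+1}\cdots y_{t-1})$ depends only on the history $y_{t-n+1}\cdots y_{t-1}\in\underline\Sigma^{\,n-1}$ (the last $n-1$ symbols of the padded prefix); the distributions on $\overline\Sigma$ assigned to the histories are arbitrary (probabilities may be $0$). Transformers. A transformer of width $D$ processes a string $w=w_1\cdots w_T$ over $\underline\Sigma$ (for an LM, the prefix $y_{<t}$ left-padded with $n-1$ copies of BOS) as follows. A static encoding gives $x^0_j=r(w_j,j)\in\mathbb R^D$ for a function $r:\underline\Sigma\times\mathbb N\to\mathbb R^D$. An attention head with query, key, value, output functions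 $Q,K,V,O:\mathbb R^D\to\mathbb R^D$, scoring function $f:\mathbb R^D\times\mathbb R^D\to\mathbb R$ and normalization function $\pi$ maps $(x_1,\dots,x_T)$ to $(z_1,\dots,z_T)$ where, for each position $s$, $q_s=Q(x_s)$, $k_j=K(x_j)$, $v_j=V(x_j)$, $\sigma=\pi(f(q_s,k_1),\dots,f(q_s,k_s))$ (a probability vector), $a_s=\sum_{j=1}^s\sigma_jv_j+x_s$, $z_s=O(a_s)+a_s$. A layer with $H$ heads applies $H$ heads to the same input and maps the concatenation of the $H$ outputs at each position back to $\mathbb R^D$ with a head-combining function $\mathcal H:\mathbb R^{HD}\to\mathbb R^D$; an $L$-layer transformer composes $L$ layers after $r$. Given a final function $F:\mathbb R^D\to\mathbb R^D$ and an output matrix $E\in(\mathbb R\cup\{-\infty\})^{|\overline\Sigma|\times D}$ (with $\exp(-\infty)=0$), the transformer LM sets $p(y_t\mid y_{<t})=\mathrm{softmax}(E\,F(x^L))_{y_t}$, where $x^L$ is the last-layer representation at the last position of the padded prefix $y_{<t}$. In this definition $r,Q,K,V,O,f,\mathcal H,F$ are arbitrary functions. Hard attention means $\pi=\mathrm{hardmax}$, where $\mathrm{hardmax}(x)_d=1/m$ if $d\in\arg\max x$ with $m=|\arg\max x|$, and $0$ otherwise. Sparse attention means $\pi=\mathrm{sparsemax}$, $\mathrm{sparsemax}(x)=\arg\min_{p\in\Delta}\|p-x\|_2^2$ over the probability simplex $\Delta$. *)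

theory Defs
  imports "HOL-Analysis.Analysis"
begin

text \<open>The alphabet Sigma is a finite (hence nonempty) type 'a. Over-Sigma = Sym ` UNIV \<union> {EOS}; under-Sigma = Sym ` UNIV \<union> {BOS}.\<close>

datatype 'a sym = Sym 'a | BOS | EOS

text \<open>A probability distribution on Sigma \<union> {EOS}, represented as a function on
 'a sym that is zero at BOS (which is outside its domain).\<close>
definition is_dist_bar :: "('a::finite sym \<Rightarrow> real) \<Rightarrow> bool" where
  "is_dist_bar d \<longleftrightarrow> (\<forall>s. d s \<ge> 0) \<and> d BOS = 0 \<and>
     d EOS + (\<Sum>a\<in>UNIV. d (Sym a)) = 1"

text \<open>An autoregressive model is given by its conditionals cond y_{<t} y_t.\<close>
definition string_prob :: "('a list \<Rightarrow> 'a sym \<Rightarrow> real) \<Rightarrow> 'a list \<Rightarrow> real" where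
  "string_prob cond y = cond y EOS * (\<Prod>t<length y. cond (take t y) (Sym (y ! t)))"

definition is_LM :: "('a::finite list \<Rightarrow> 'a sym \<Rightarrow> real) \<Rightarrow> bool" where
  "is_LM cond \<longleftrightarrow> (\<forall>h. is_dist_bar (cond h)) \<and>
     ((\<lambda>y. string_prob cond y) has_sum 1) UNIV"

definition weakly_equiv :: "('a list \<Rightarrow> 'a sym \<Rightarrow> real) \<Rightarrow> ('a list \<Rightarrow> 'a sym \<Rightarrow> real) \<Rightarrow> bool" where
  "weakly_equiv p q \<longleftrightarrow> (\<forall>y. string_prob p y = string_prob q y)"

definition pad :: "nat \<Rightarrow> 'a list \<Rightarrow> 'a sym list" where
  "pad n y = replicate (n - 1) BOS @ map Sym y"

definition last_n :: "nat \<Rightarrow> 'b list \<Rightarrow> 'b list" where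
  "last_n k w = drop (length w - k) w"

definition is_ngram_LM :: "nat \<Rightarrow> ('a::finite list \<Rightarrow> 'a sym \<Rightarrow> real) \<Rightarrow> bool" where
  "is_ngram_LM n p \<longleftrightarrow> is_LM p \<and>
     (\<exists>g. \<forall>y. p y = g (last_n (n - 1) (pad n y)))"

text \<open>Vectors of R^D are represented as nat \<Rightarrow> real vanishing at coordinates \<ge> D.\<close>
type_synonym vec = "nat \<Rightarrow> real"

definition wvec :: "nat \<Rightarrow> vec \<Rightarrow> bool" where
  "wvec D x \<longleftrightarrow> (\<forall>i\<ge>D. x i = 0)"

record head =
  hQ :: "vec \<Rightarrow> vec"
  hK :: "vec \<Rightarrow> vec"
  hV :: "vec \<Rightarrow> vec"
  hO :: "vec \<Rightarrow> vec"
  hscore :: "vec \<Rightarrow> vec \<Rightarrow> real"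

text \<open>A layer is a list of heads together with a head-combining function
 (taking the H head outputs at a position, i.e. their concatenation).\<close>
record 'a transformer =
  width :: nat
  embed :: "'a sym \<Rightarrow> nat \<Rightarrow> vec"
  layers :: "(head list \<times> (vec list \<Rightarrow> vec)) list"
  final :: "vec \<Rightarrow> vec"
  outmat :: "'a sym \<Rightarrow> nat \<Rightarrow> ereal"

definition prob_simplex :: "nat \<Rightarrow> real list set" where
  "prob_simplex m = {p. length p = m \<and> (\<forall>i<m. p ! i \<ge> 0) \<and> sum_list p = 1}"

definition sqdist_list :: "real list \<Rightarrow> real list \<Rightarrow> real" where
  "sqdist_list p x = (\<Sum>i<length x. (p ! i - x ! i)^2)"

definition sparsemax :: "real list \<Rightarrow> real list" where
  "sparsemax x = (THE p. p \<in> prob_simplex (length x) \<and>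
      (\<forall>q\<in>prob_simplex (length x). sqdist_list p x \<le> sqdist_list q x))"

text \<open>Attention head with normalization function pi (positions 0-based here).\<close>
definition head_out :: "(real list \<Rightarrow> real list) \<Rightarrow> head \<Rightarrow> vec list \<Rightarrow> vec list" where
  "head_out \<pi> h xs = map (\<lambda>s.
      let q = hQ h (xs ! s);
          \<sigma> = \<pi> (map (\<lambda>j. hscore h q (hK h (xs ! j))) [0..<Suc s]);
          a = (\<lambda>i. (\<Sum>j\<le>s. (\<sigma> ! j) * hV h (xs ! j) i) + (xs ! s) i)
      in (\<lambda>i. hO h a i + a i)) [0..<length xs]"

definition layer_out :: "(real list \<Rightarrow> real list) \<Rightarrow> head list \<times> (vec list \<Rightarrow> vec) \<Rightarrow> vec list \<Rightarrow> vec list" where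
  "layer_out \<pi> L xs = map (\<lambda>s. snd L (map (\<lambda>h. head_out \<pi> h xs ! s) (fst L))) [0..<length xs]"

text \<open>Static encoding r(w_j, j) with 1-based position j, then the layers in order.\<close>
definition tf_repr :: "(real list \<Rightarrow> real list) \<Rightarrow> 'a transformer \<Rightarrow> 'a sym list \<Rightarrow> vec list" where
  "tf_repr \<pi> T w = fold (layer_out \<pi>) (layers T) (map (\<lambda>j. embed T (w ! j) (Suc j)) [0..<length w])"

text \<open>exp extended to R \<union> {-\<infinity>} by exp(-\<infinity>) = 0 (logits are meant to lie in
 R \<union> {-\<infinity>}; a +\<infinity> logit is also assigned weight 0).\<close>
definition ext_exp :: "ereal \<Rightarrow> real" where
  "ext_exp x = (case x of ereal r \<Rightarrow> exp r | _ \<Rightarrow> 0)"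

definition logit :: "'a transformer \<Rightarrow> vec \<Rightarrow> 'a sym \<Rightarrow> ereal" where
  "logit T v s = (\<Sum>i<width T. outmat T s i * ereal (v i))"

definition tf_cond :: "(real list \<Rightarrow> real list) \<Rightarrow> nat \<Rightarrow> 'a::finite transformer \<Rightarrow> 'a list \<Rightarrow> 'a sym \<Rightarrow> real" where
  "tf_cond \<pi> n T y s =
     (let v = final T (last (tf_repr \<pi> T (pad n y)));
          Z = ext_exp (logit T v EOS) + (\<Sum>a\<in>UNIV. ext_exp (logit T v (Sym a)))
      in if s = BOS then 0 else ext_exp (logit T v s) / Z)"

text \<open>Width-D well-formedness: all maps act on R^D, E has entries in R \<union> {-\<infinity>}.\<close>
definition wf_transformer :: "'a transformer \<Rightarrow> bool" where
  "wf_transformer T \<longleftrightarrow> (let D = width T in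
     (\<forall>s j. wvec D (embed T s j)) \<and>
     (\<forall>L\<in>set (layers T).
        (\<forall>h\<in>set (fst L). \<forall>x. wvec D x \<longrightarrow>
            wvec D (hQ h x) \<and> wvec D (hK h x) \<and> wvec D (hV h x) \<and> wvec D (hO h x)) \<and>
        (\<forall>zs. length zs = length (fst L) \<and> (\<forall>z\<in>set zs. wvec D z) \<longrightarrow> wvec D (snd L zs))) \<and>
     (\<forall>x. wvec D x \<longrightarrow> wvec D (final T x)) \<and>
     (\<forall>s i. outmat T s i \<noteq> \<infinity>))"

end

theory Submission
  imports Defs
begin

lemma sparsemax_id:
  assumes "x \<in> prob_simplex (length x)"
  shows "sparsemax x = x"
  unfolding sparsemax_def
proof (rule the_equality)
  show "x \<in> prob_simplex (length x) \<and> (\<forall>q\<in>prob_simplex (length x). sqdist_list x x \<le> sqdist_list q x)"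
    using assms by (auto simp: sqdist_list_def intro!: sum_nonneg)
next
  fix p assume h: "p \<in> prob_simplex (length x) \<and> (\<forall>q\<in>prob_simplex (length x). sqdist_list p x \<le> sqdist_list q x)"
  hence "sqdist_list p x \<le> sqdist_list x x" using assms by blast
  hence le: "sqdist_list p x \<le> 0" by (simp add: sqdist_list_def)
  have "(\<Sum>i<length x. (p ! i - x ! i)^2) = 0"
    using le unfolding sqdist_list_def by (meson antisym sum_nonneg zero_le_power2)
  hence "\<forall>i\<in>{..<length x}. (p ! i - x ! i)^2 = 0"
    by (subst sum_nonneg_eq_0_iff[symmetric]) auto
  hence "\<forall>i<length x. p ! i = x ! i" by auto
  moreover have "length p = length x" using h by (simp add: prob_simplex_def)
  ultimately show "p = x" by (simp add: nth_equalityI)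
qed

definition emb :: "('a sym \<Rightarrow> nat) \<Rightarrow> 'a sym \<Rightarrow> nat \<Rightarrow> vec" where
  "emb idx s j = (\<lambda>c. if c = 0 then real j else if c = 1 then real (idx s) else 0)"

definition hdi :: "nat \<Rightarrow> head" where
  "hdi i = \<lparr>hQ = id, hK = id, hV = id, hO = (\<lambda>_ _. 0),
     hscore = (\<lambda>q k. if k 0 = q 0 - real i then 1 else 0)\<rparr>"

lemma head_at:
  assumes pos: "\<And>j. j < length xs \<Longrightarrow> (xs ! j) 0 = real (Suc j)"
    and "i \<le> s" and "s < length xs"
  shows "head_out sparsemax (hdi i) xs ! s = (\<lambda>c. (xs ! (s - i)) c + (xs ! s) c)"
proof -
  define \<sigma> where "\<sigma> = map (\<lambda>j. if j = s - i then 1 else (0::real)) [0..<Suc s]"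
  have sc: "map (\<lambda>j. hscore (hdi i) (hQ (hdi i) (xs ! s)) (hK (hdi i) (xs ! j))) [0..<Suc s] = \<sigma>"
    unfolding \<sigma>_def hdi_def using pos assms by (auto simp: algebra_simps)
  have "\<sigma> \<in> prob_simplex (length \<sigma>)"
  proof -
    have "sum_list \<sigma> = (\<Sum>j\<in>{0..<Suc s}. if j = s - i then 1 else (0::real))"
      unfolding \<sigma>_def by (simp add: sum_set_upt_conv_sum_list_nat[symmetric])
    also have "\<dots> = 1" using assms by simp
    moreover have "\<forall>j<length \<sigma>. \<sigma> ! j \<ge> 0" unfolding \<sigma>_def by (simp del: upt_Suc)
    ultimately show ?thesis unfolding prob_simplex_def by auto
  qed
  hence sm: "sparsemax \<sigma> = \<sigma>" by (rule sparsemax_id)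
  have nth: "\<And>j. j \<le> s \<Longrightarrow> \<sigma> ! j = (if j = s - i then 1 else 0)"
    unfolding \<sigma>_def by (simp add: nth_append less_Suc_eq_le del: upt_Suc)
  have "(\<Sum>j\<le>s. \<sigma> ! j * (xs ! j) c) = (xs ! (s - i)) c" for c
  proof -
    have "(\<Sum>j\<le>s. \<sigma> ! j * (xs ! j) c) = (\<Sum>j\<le>s. if j = s - i then (xs ! j) c else 0)"
      by (rule sum.cong) (auto simp: nth)
    also have "\<dots> = (xs ! (s - i)) c" by simp
    finally show ?thesis .
  qed
  thus ?thesis using assms unfolding head_out_def
    by (simp add: sc sm Let_def del: upt_Suc) (simp add: hdi_def)
qed

definition vecOf :: "nat \<Rightarrow> ('a sym \<Rightarrow> nat) \<Rightarrow> ('a sym \<Rightarrow> real) \<Rightarrow> vec" where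
  "vecOf D idx d = (\<lambda>c. if c < D then (let s = inv idx (c div 2) in
      if even c then ln (d s) else (if d s > 0 then 0 else 1)) else 0)"

definition omat :: "('a sym \<Rightarrow> nat) \<Rightarrow> 'a sym \<Rightarrow> nat \<Rightarrow> ereal" where
  "omat idx s c = (if c = 2 * idx s then 1 else if c = 2 * idx s + 1 then -\<infinity> else 0)"

lemma logit_sum:
  assumes "inj idx" "2 * idx s + 1 < D" "d s \<ge> 0"
  shows "(\<Sum>c<D. omat idx s c * ereal (vecOf D idx d c)) = (if d s > 0 then ereal (ln (d s)) else -\<infinity>)"
proof -
  let ?k = "idx s"
  have "(\<Sum>c<D. omat idx s c * ereal (vecOf D idx d c)) = (\<Sum>c\<in>{2*?k, 2*?k+1}. omat idx s c * ereal (vecOf D idx d c))"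
    using assms by (intro sum.mono_neutral_right) (auto simp: omat_def)
  also have "\<dots> = ereal (vecOf D idx d (2*?k)) + (-\<infinity>) * ereal (vecOf D idx d (2*?k+1))"
    by (simp add: omat_def)
  also have "\<dots> = (if d s > 0 then ereal (ln (d s)) else -\<infinity>)"
    using assms by (simp add: vecOf_def inv_f_f)
  finally show ?thesis .
qed

lemma finite_sym: "finite (UNIV :: 'a::finite sym set)"
proof -
  have "(UNIV :: 'a sym set) = range Sym \<union> {BOS, EOS}" by (auto intro: sym.exhaust)
  moreover have "finite (range (Sym :: 'a \<Rightarrow> 'a sym) \<union> {BOS, EOS})" by simp
  ultimately show ?thesis by metis
qed

lemma ext_exp_logit:
  assumes "d \<ge> 0" shows "ext_exp (if d > 0 then ereal (ln d) else -\<infinity>) = d"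
  using assms by (auto simp: ext_exp_def)

theorem theorem4p1:
  fixes p :: "'a::finite list \<Rightarrow> 'a sym \<Rightarrow> real" and n :: nat
  assumes "n \<ge> 2" and "is_ngram_LM n p"
  shows "\<exists>T :: 'a transformer. wf_transformer T \<and> length (layers T) = 1 \<and>
           (\<forall>L\<in>set (layers T). length (fst L) = n - 1) \<and>
           is_LM (tf_cond sparsemax n T) \<and> weakly_equiv p (tf_cond sparsemax n T)"
proof -
  obtain idx :: "'a sym \<Rightarrow> nat" and N where idx: "idx ` UNIV = {i. i < N}" "inj idx"
    using finite_imp_inj_to_nat_seg[OF finite_sym] by blast
  have idxN: "idx s < N" for s using idx(1) by auto
  obtain g where g: "\<And>y. p y = g (last_n (n - 1) (pad n y))" and lm: "is_LM p"
    using assms(2) unfolding is_ngram_LM_def by blast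
  define D where "D = 2 * N + 2"
  define dec where "dec zs = map (\<lambda>i. inv idx (nat \<lfloor>(zs ! i) 1 - (zs ! 0) 1 / 2\<rfloor>)) (rev [0..<n-1])"
    for zs :: "vec list"
  define H where "H zs = vecOf D idx (g (dec zs))" for zs
  define T :: "'a transformer" where "T = \<lparr>width = D, embed = emb idx, layers = [(map hdi [0..<n-1], H)],
     final = id, outmat = omat idx\<rparr>"
  have key: "tf_cond sparsemax n T y = p y" for y
  proof -
    define w where "w = pad n y"
    define xs where "xs = map (\<lambda>j. emb idx (w ! j) (Suc j)) [0..<length w]"
    define s where "s = length w - 1"
    have lw: "length w = n - 1 + length y" unfolding w_def pad_def by simp
    have s_ge: "n - 2 \<le> s" "s < length w" using assms(1) lw unfolding s_def by auto
    have lxs: "length xs = length w" unfolding xs_def by simp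
    have xsj: "xs ! j = emb idx (w ! j) (Suc j)" if "j < length w" for j
      using that unfolding xs_def by simp
    have pos: "(xs ! j) 0 = real (Suc j)" if "j < length xs" for j
      using that by (simp add: lxs xsj emb_def)
    have hd: "head_out sparsemax (hdi i) xs ! s = (\<lambda>c. (xs ! (s - i)) c + (xs ! s) c)" if "i \<le> s" for i
      by (rule head_at[OF pos that]) (use s_ge lxs in auto)
    have rep: "last (tf_repr sparsemax T w) = H (map (\<lambda>h. head_out sparsemax h xs ! s) (map hdi [0..<n-1]))"
    proof -
      have ne: "[0..<length w] \<noteq> []" "w \<noteq> []" using s_ge by auto
      show ?thesis
        unfolding tf_repr_def T_def layer_out_def
        using ne by (simp add: xs_def last_map s_def del: upt_Suc)
    qed
    have "dec (map (\<lambda>h. head_out sparsemax h xs ! s) (map hdi [0..<n-1])) = last_n (n - 1) w"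
    proof (rule nth_equalityI)
      show "length (dec (map (\<lambda>h. head_out sparsemax h xs ! s) (map hdi [0..<n-1]))) = length (last_n (n - 1) w)"
        unfolding dec_def last_n_def using lw by simp
    next
      fix k assume k: "k < length (dec (map (\<lambda>h. head_out sparsemax h xs ! s) (map hdi [0..<n-1])))"
      hence k': "k < n - 1" unfolding dec_def by simp
      define i where "i = n - 2 - k"
      have i: "i < n - 1" "i \<le> s" using k' s_ge assms(1) unfolding i_def by auto
      have e1: "(head_out sparsemax (hdi i) xs ! s) 1 = real (idx (w ! (s - i))) + real (idx (w ! s))"
        using hd[OF i(2)] s_ge by (simp add: xsj emb_def)
      have e0: "(head_out sparsemax (hdi 0) xs ! s) 1 = 2 * real (idx (w ! s))"
        using hd[of 0] s_ge by (simp add: xsj emb_def)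
      have "dec (map (\<lambda>h. head_out sparsemax h xs ! s) (map hdi [0..<n-1])) ! k
          = inv idx (nat \<lfloor>(head_out sparsemax (hdi i) xs ! s) 1 - (head_out sparsemax (hdi 0) xs ! s) 1 / 2\<rfloor>)"
        using k' i assms(1) unfolding dec_def i_def by (simp add: rev_nth)
      also have "\<dots> = w ! (s - i)" using e0 e1 idx(2) by (simp add: inv_f_f)
      also have "\<dots> = last_n (n - 1) w ! k"
        unfolding last_n_def using k' s_ge lw assms(1) unfolding i_def s_def
        by (simp add: nth_drop) (rule arg_cong[where f="(!) w"]; linarith)
      finally show "dec (map (\<lambda>h. head_out sparsemax h xs ! s) (map hdi [0..<n-1])) ! k = last_n (n - 1) w ! k" .
    qed
    hence v: "final T (last (tf_repr sparsemax T w)) = vecOf D idx (p y)"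
      using rep unfolding H_def g w_def by (simp add: T_def)
    have dist: "is_dist_bar (p y)" using lm unfolding is_LM_def by blast
    have nn: "p y t \<ge> 0" for t using dist unfolding is_dist_bar_def by blast
    have lg: "ext_exp (logit T (vecOf D idx (p y)) t) = p y t" for t
    proof -
      have "2 * idx t + 1 < D" using idxN[of t] unfolding D_def by simp
      hence "logit T (vecOf D idx (p y)) t = (if p y t > 0 then ereal (ln (p y t)) else -\<infinity>)"
        unfolding logit_def using logit_sum[OF idx(2) _ nn] by (simp add: T_def)
      thus ?thesis using ext_exp_logit[OF nn] by simp
    qed
    show ?thesis
    proof
      fix t
      show "tf_cond sparsemax n T y t = p y t"
        unfolding tf_cond_def w_def[symmetric] v using dist
        by (simp add: lg is_dist_bar_def Let_def del: vecOf_def)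
    qed
  qed
  have eq: "tf_cond sparsemax n T = p" using key by blast
  have wf: "wf_transformer T"
    unfolding wf_transformer_def T_def
    by (auto simp: Let_def wvec_def emb_def D_def hdi_def H_def vecOf_def omat_def)
  show ?thesis
  proof (rule exI[of _ T], intro conjI)
    show "length (layers T) = 1" "\<forall>L\<in>set (layers T). length (fst L) = n - 1"
      by (simp_all add: T_def)
  qed (simp_all add: wf eq lm weakly_equiv_def)
qed

end
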